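(* Let $K$ be a valued field, $d\ge 1$, and $X\subseteq K^d$. Suppose that for all $x,y,z\in X$ and all $\alpha,\beta,\gamma\in\mathcal{O}$ with $\alpha+\beta+\gamma=1$ we have $\alpha x+\beta y+\gamma z\in X$. Then $X$ is convex.
   Context: $K$ is a field with a (Krull) valuation $\nu:K\to\Gamma\cup\{\infty\}$, valuation ring $\mathcal{O}=\{x:\nu(x)\ge 0\}$, maximal ideal $\mathfrak{m}=\{x:\nu(x)>0\}$ and residue field $k=\mathcal{O}/\mathfrak{m}$. A set $X\subseteq K^d$ is convex if for every $n\ge 1$, all $x_1,\dots,x_n\in X$ and all $\alpha_1,\dots,\alpha_n\in\mathcal{O}$ with $\alpha_1+\dots+\alpha_n=1$, we have $\alpha_1x_1+\dots+\alpha_nx_n\in X$ (such a sum is called a convex combination). *)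

theory Defs
  imports "HOL-Analysis.Analysis"
begin

text \<open>The value at 0 is the formal element infinity; we model nu on the nonzero
  elements only (the value nu 0 is irrelevant and never used).\<close>

definition valuation :: "('k::field \<Rightarrow> 'g::linordered_ab_group_add) \<Rightarrow> bool" where
  "valuation \<nu> \<longleftrightarrow>
     (\<forall>x y. x \<noteq> 0 \<and> y \<noteq> 0 \<longrightarrow> \<nu> (x * y) = \<nu> x + \<nu> y) \<and>
     (\<forall>x y. x \<noteq> 0 \<and> y \<noteq> 0 \<and> x + y \<noteq> 0 \<longrightarrow> min (\<nu> x) (\<nu> y) \<le> \<nu> (x + y))"

definition val_ring :: "('k::field \<Rightarrow> 'g::linordered_ab_group_add) \<Rightarrow> 'k set" where
  "val_ring \<nu> = {x. x = 0 \<or> 0 \<le> \<nu> x}"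

text \<open>Scalar multiplication on K^d, with d the cardinality of the finite index type 'n.\<close>

definition vsmult :: "'k::field \<Rightarrow> 'k ^ 'n \<Rightarrow> 'k ^ 'n" where
  "vsmult a x = (\<chi> i. a * x $ i)"

definition val_convex :: "('k::field \<Rightarrow> 'g::linordered_ab_group_add) \<Rightarrow> ('k ^ 'n) set \<Rightarrow> bool" where
  "val_convex \<nu> X \<longleftrightarrow>
     (\<forall>n::nat. \<forall>x :: nat \<Rightarrow> 'k ^ 'n. \<forall>\<alpha> :: nat \<Rightarrow> 'k.
        n \<ge> 1 \<longrightarrow> (\<forall>i<n. x i \<in> X) \<longrightarrow> (\<forall>i<n. \<alpha> i \<in> val_ring \<nu>) \<longrightarrow>
        (\<Sum>i<n. \<alpha> i) = 1 \<longrightarrow> (\<Sum>i<n. vsmult (\<alpha> i) (x i)) \<in> X)"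

end

theory Submission
  imports Defs
begin

lemma val_one: assumes "valuation \<nu>" shows "\<nu> (1::'k::field) = (0::'g::linordered_ab_group_add)"
proof -
  have "\<nu> ((1::'k) * 1) = \<nu> 1 + \<nu> 1" using assms unfolding valuation_def by (metis one_neq_zero)
  then show ?thesis by simp
qed

lemma val_m1: assumes "valuation \<nu>" shows "\<nu> (-1::'k::field) = (0::'g::linordered_ab_group_add)"
proof -
  have "\<nu> ((-1::'k) * -1) = \<nu> (-1) + \<nu> (-1)" using assms unfolding valuation_def
    by (metis neg_equal_0_iff_equal one_neq_zero)
  then have h: "\<nu> (-1::'k) + \<nu> (-1) = 0" using val_one[OF assms] by simp
  show ?thesis
  proof (rule ccontr)
    assume "\<nu> (-1::'k) \<noteq> 0"
    then consider "\<nu> (-1::'k) < 0" | "\<nu> (-1::'k) > 0" by fastforce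
    then show False using h
      by cases (metis add_neg_neg less_irrefl, metis add_pos_pos less_irrefl)
  qed
qed

lemma val_ring_neg: assumes "valuation \<nu>" "a \<in> val_ring \<nu>" shows "-a \<in> val_ring \<nu>"
proof (cases "a = 0")
  case False
  have "\<nu> ((-1) * a) = \<nu> (-1) + \<nu> a" using assms False unfolding valuation_def
    by (metis neg_equal_0_iff_equal one_neq_zero)
  then show ?thesis using assms False val_m1[OF assms(1)] unfolding val_ring_def by simp
qed (simp add: val_ring_def)

lemma val_ring_one: assumes "valuation \<nu>" shows "1 \<in> val_ring \<nu>"
  using val_one[OF assms] unfolding val_ring_def by simp

lemma key:
  fixes \<nu> :: "'k::field \<Rightarrow> 'g::linordered_ab_group_add"
    and X :: "('k ^ 'n) set"
  assumes v: "valuation \<nu>"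
    and H: "\<forall>x\<in>X. \<forall>y\<in>X. \<forall>z\<in>X. \<forall>\<alpha>\<in>val_ring \<nu>. \<forall>\<beta>\<in>val_ring \<nu>. \<forall>\<gamma>\<in>val_ring \<nu>.
           \<alpha> + \<beta> + \<gamma> = 1 \<longrightarrow> vsmult \<alpha> x + vsmult \<beta> y + vsmult \<gamma> z \<in> X"
    and z: "z \<in> X"
  fixes m :: nat
  shows "(\<forall>i<m. x i \<in> X) \<longrightarrow> (\<forall>i<m. a i \<in> val_ring \<nu>) \<longrightarrow>
     z + (\<Sum>i<m. vsmult (a i) (x i - z)) \<in> X"
proof (induction m)
  case 0
  then show ?case using z by simp
next
  case (Suc m)
  show ?case
  proof (intro impI)
    assume xs: "\<forall>i<Suc m. x i \<in> X" and as: "\<forall>i<Suc m. a i \<in> val_ring \<nu>"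
    define w where "w = z + (\<Sum>i<m. vsmult (a i) (x i - z))"
    have w: "w \<in> X" using Suc xs as unfolding w_def by simp
    have "vsmult 1 w + vsmult (a m) (x m) + vsmult (- a m) z \<in> X"
      using H w xs as z val_ring_one[OF v] val_ring_neg[OF v] by simp
    moreover have "vsmult 1 w + vsmult (a m) (x m) + vsmult (- a m) z
       = z + (\<Sum>i<Suc m. vsmult (a i) (x i - z))"
      unfolding w_def by (simp add: vec_eq_iff vsmult_def sum_component algebra_simps)
    ultimately show "z + (\<Sum>i<Suc m. vsmult (a i) (x i - z)) \<in> X" by simp
  qed
qed

theorem proposition2p5:
  fixes \<nu> :: "'k::field \<Rightarrow> 'g::linordered_ab_group_add"
    and X :: "('k ^ 'n) set"
  assumes "valuation \<nu>"
    and "\<forall>x\<in>X. \<forall>y\<in>X. \<forall>z\<in>X. \<forall>\<alpha>\<in>val_ring \<nu>. \<forall>\<beta>\<in>val_ring \<nu>. \<forall>\<gamma>\<in>val_ring \<nu>.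
           \<alpha> + \<beta> + \<gamma> = 1 \<longrightarrow> vsmult \<alpha> x + vsmult \<beta> y + vsmult \<gamma> z \<in> X"
  shows "val_convex \<nu> X"
  unfolding val_convex_def
proof (intro allI impI)
  fix n :: nat and x :: "nat \<Rightarrow> 'k ^ 'n" and \<alpha> :: "nat \<Rightarrow> 'k"
  assume n: "n \<ge> 1" and xs: "\<forall>i<n. x i \<in> X" and as: "\<forall>i<n. \<alpha> i \<in> val_ring \<nu>"
    and s: "(\<Sum>i<n. \<alpha> i) = 1"
  obtain m where m: "n = Suc m" using n by (cases n) auto
  have x0: "x 0 \<in> X" using xs m by simp
  have "x 0 + (\<Sum>i<m. vsmult (\<alpha> (Suc i)) (x (Suc i) - x 0)) \<in> X"
    using key[OF assms x0, of m "\<lambda>i. x (Suc i)" "\<lambda>i. \<alpha> (Suc i)"] xs as m by simp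
  moreover have s': "\<alpha> 0 = 1 - (\<Sum>i<m. \<alpha> (Suc i))"
  proof -
    have "(\<Sum>i<Suc m. \<alpha> i) = \<alpha> 0 + (\<Sum>i<m. \<alpha> (Suc i))" by (rule sum.lessThan_Suc_shift)
    then show ?thesis using s m by (simp del: sum.lessThan_Suc add: eq_diff_eq)
  qed
  have cj: "(\<Sum>i<n. vsmult (\<alpha> i) (x i)) $ j = x 0 $ j + (\<Sum>i<m. vsmult (\<alpha> (Suc i)) (x (Suc i) - x 0)) $ j" for j
      unfolding m sum_component vsmult_def sum.lessThan_Suc_shift
      by (simp del: sum.lessThan_Suc add: s' algebra_simps sum_subtractf sum_distrib_right) (metis (no_types) sum_distrib_right mult.commute)
  have "(\<Sum>i<n. vsmult (\<alpha> i) (x i)) = x 0 + (\<Sum>i<m. vsmult (\<alpha> (Suc i)) (x (Suc i) - x 0))"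
    unfolding vec_eq_iff using cj by simp
  ultimately show "(\<Sum>i<n. vsmult (\<alpha> i) (x i)) \<in> X" by simp
qed

end
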